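(* Let $\mathcal{C}=(\mathcal{T},\mathcal{I},\mathcal{R})$ be an extraction context with thresholds \textit{minsupp} and \textit{minbond}. Then $\mathcal{M}in\mathcal{MCR}=\mathcal{CRCP}\cup\mathcal{M}in\mathcal{MRCP}$, with each element $J$ recorded together with $\mathit{Supp}(\wedge J)$ and $\mathit{bond}(J)$, is an exact concise representation of the set $\mathcal{RCP}$ of rare correlated patterns.
   Context: An extraction context is a triple $\mathcal{C}=(\mathcal{T},\mathcal{I},\mathcal{R})$ with $\mathcal{T}$ a finite set of transactions, $\mathcal{I}$ a finite set of items and $\mathcal{R}\subseteq\mathcal{T}\times\mathcal{I}$. For a pattern $I\subseteq\mathcal{I}$: $\mathit{Supp}(\wedge I)=|\{t:\forall i\in I,(t,i)\in\mathcal{R}\}|$, $\mathit{Supp}(\vee I)=|\{t:\exists i\in I,(t,i)\in\mathcal{R}\}|$, and for nonempty $I$, $\mathit{bond}(I)=\mathit{Supp}(\wedge I)/\mathit{Supp}(\vee I)$ (with $\mathit{bond}(\emptyset)=+\infty$ by convention). $\mathcal{RCP}=\{I\subseteq\mathcal{I}:\mathit{Supp}(\wedge I)<\textit{minsupp},\ \mathit{bond}(I)\ge\textit{minbond}\}$. $\mathcal{CRCP}=\{I\in\mathcal{RCP}:\forall I_1\supsetneq I,\ \mathit{bond}(I)>\mathit{bond}(I_1)\}$; $\mathcal{MRCP}=\{I\in\mathcal{RCP}:\forall I_1\subsetneq I,\ \mathit{bond}(I)<\mathit{bond}(I_1)\}$. Minimal rare patterns: $\mathcal{M}in\mathcal{RP}$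 is the set of patterns $I$ with $\mathit{Supp}(\wedge I)<\textit{minsupp}$ such that every proper subset $I_1\subsetneq I$ satisfies $\mathit{Supp}(\wedge I_1)\ge\textit{minsupp}$. $\mathcal{M}in\mathcal{MRCP}=\mathcal{MRCP}\cap\mathcal{M}in\mathcal{RP}$. A family $\mathcal{S}\subseteq\mathcal{RCP}$, with each $J\in\mathcal{S}$ recorded together with $\mathit{Supp}(\wedge J)$ and $\mathit{bond}(J)$, is an exact concise representation of $\mathcal{RCP}$ if, for every pattern $I\subseteq\mathcal{I}$, the recorded data alone suffice to decide whether $I\in\mathcal{RCP}$ and, when $I\in\mathcal{RCP}$, to determine exactly $\mathit{Supp}(\wedge I)$ and $\mathit{bond}(I)$. *)

theory Defs
  imports Main "HOL-Library.Extended_Real"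
begin

definition extraction_context :: "'t set \<Rightarrow> 'i set \<Rightarrow> ('t \<times> 'i) set \<Rightarrow> bool" where
  "extraction_context T Is R \<longleftrightarrow> finite T \<and> finite Is \<and> R \<subseteq> T \<times> Is"

definition supp_conj :: "'t set \<Rightarrow> ('t \<times> 'i) set \<Rightarrow> 'i set \<Rightarrow> nat" where
  "supp_conj T R I = card {t \<in> T. \<forall>i \<in> I. (t, i) \<in> R}"

definition supp_disj :: "'t set \<Rightarrow> ('t \<times> 'i) set \<Rightarrow> 'i set \<Rightarrow> nat" where
  "supp_disj T R I = card {t \<in> T. \<exists>i \<in> I. (t, i) \<in> R}"

text \<open>bond(empty) = +infinity; otherwise Supp(and I)/Supp(or I) (Isabelle's x/0 = 0 convention
  applies in the degenerate case Supp(or I) = 0).\<close>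
definition bond :: "'t set \<Rightarrow> ('t \<times> 'i) set \<Rightarrow> 'i set \<Rightarrow> ereal" where
  "bond T R I = (if I = {} then \<infinity>
     else ereal (real (supp_conj T R I) / real (supp_disj T R I)))"

definition RCP :: "'t set \<Rightarrow> 'i set \<Rightarrow> ('t \<times> 'i) set \<Rightarrow> nat \<Rightarrow> real \<Rightarrow> 'i set set" where
  "RCP T Is R minsupp minbond =
     {I. I \<subseteq> Is \<and> supp_conj T R I < minsupp \<and> bond T R I \<ge> ereal minbond}"

definition CRCP :: "'t set \<Rightarrow> 'i set \<Rightarrow> ('t \<times> 'i) set \<Rightarrow> nat \<Rightarrow> real \<Rightarrow> 'i set set" where
  "CRCP T Is R minsupp minbond =
     {I \<in> RCP T Is R minsupp minbond.
        \<forall>I1. I \<subset> I1 \<and> I1 \<subseteq> Is \<longrightarrow> bond T R I > bond T R I1}"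

definition MRCP :: "'t set \<Rightarrow> 'i set \<Rightarrow> ('t \<times> 'i) set \<Rightarrow> nat \<Rightarrow> real \<Rightarrow> 'i set set" where
  "MRCP T Is R minsupp minbond =
     {I \<in> RCP T Is R minsupp minbond. \<forall>I1. I1 \<subset> I \<longrightarrow> bond T R I < bond T R I1}"

definition MinRP :: "'t set \<Rightarrow> 'i set \<Rightarrow> ('t \<times> 'i) set \<Rightarrow> nat \<Rightarrow> 'i set set" where
  "MinRP T Is R minsupp =
     {I. I \<subseteq> Is \<and> supp_conj T R I < minsupp \<and> (\<forall>I1. I1 \<subset> I \<longrightarrow> supp_conj T R I1 \<ge> minsupp)}"

definition MinMRCP :: "'t set \<Rightarrow> 'i set \<Rightarrow> ('t \<times> 'i) set \<Rightarrow> nat \<Rightarrow> real \<Rightarrow> 'i set set" where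
  "MinMRCP T Is R minsupp minbond = MRCP T Is R minsupp minbond \<inter> MinRP T Is R minsupp"

definition MinMCR :: "'t set \<Rightarrow> 'i set \<Rightarrow> ('t \<times> 'i) set \<Rightarrow> nat \<Rightarrow> real \<Rightarrow> 'i set set" where
  "MinMCR T Is R minsupp minbond = CRCP T Is R minsupp minbond \<union> MinMRCP T Is R minsupp minbond"

definition recorded :: "'t set \<Rightarrow> ('t \<times> 'i) set \<Rightarrow> 'i set set \<Rightarrow> ('i set \<times> nat \<times> ereal) set" where
  "recorded T R S = {(J, supp_conj T R J, bond T R J) | J. J \<in> S}"

definition exact_concise_rep ::
  "('t set \<Rightarrow> 'i set \<Rightarrow> ('t \<times> 'i) set \<Rightarrow> nat \<Rightarrow> real \<Rightarrow> 'i set set) \<Rightarrow> bool" where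
  "exact_concise_rep F \<longleftrightarrow>
     (\<forall>T Is R minsupp minbond. extraction_context T Is R \<longrightarrow>
        F T Is R minsupp minbond \<subseteq> RCP T Is R minsupp minbond) \<and>
     (\<exists>Dec :: nat \<Rightarrow> real \<Rightarrow> ('i set \<times> nat \<times> ereal) set \<Rightarrow> 'i set \<Rightarrow> (nat \<times> ereal) option.
        \<forall>T Is R minsupp minbond. extraction_context T Is R \<longrightarrow>
          (\<forall>I. I \<subseteq> Is \<longrightarrow>
             Dec minsupp minbond (recorded T R (F T Is R minsupp minbond)) I =
               (if I \<in> RCP T Is R minsupp minbond
                then Some (supp_conj T R I, bond T R I) else None)))"

end

theory Submission
  imports Defs
begin

lemma conj_anti: "finite T \<Longrightarrow> I \<subseteq> J \<Longrightarrow> supp_conj T R J \<le> supp_conj T R I"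
  unfolding supp_conj_def by (rule card_mono) auto

lemma disj_mono: "finite T \<Longrightarrow> I \<subseteq> J \<Longrightarrow> supp_disj T R I \<le> supp_disj T R J"
  unfolding supp_disj_def by (rule card_mono) auto

lemma conj_le_disj: "finite T \<Longrightarrow> I \<noteq> {} \<Longrightarrow> supp_conj T R I \<le> supp_disj T R I"
  unfolding supp_conj_def supp_disj_def by (rule card_mono) auto

lemma bond_anti:
  assumes T: "finite T" and IJ: "I \<subseteq> J"
  shows "bond T R J \<le> bond T R I"
proof (cases "I = {}")
  case True then show ?thesis by (simp add: bond_def)
next
  case False
  hence J: "J \<noteq> {}" using IJ by auto
  have c: "supp_conj T R J \<le> supp_conj T R I" using conj_anti[OF T IJ] .
  have d: "supp_disj T R I \<le> supp_disj T R J" using disj_mono[OF T IJ] .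
  have cd: "supp_conj T R I \<le> supp_disj T R I" using conj_le_disj[OF T False] .
  show ?thesis
  proof (cases "supp_disj T R I = 0")
    case True
    then have "supp_conj T R J = 0" using c cd by simp
    then show ?thesis using False J by (simp add: bond_def)
  next
    case f2: False
    have "real (supp_conj T R J) / real (supp_disj T R J)
          \<le> real (supp_conj T R I) / real (supp_disj T R I)"
      apply (rule frac_le) using c d f2 by auto
    then show ?thesis using False J by (simp add: bond_def)
  qed
qed

lemma same_bond_conj:
  assumes T: "finite T" and IJ: "I \<subseteq> J" and eq: "bond T R J = bond T R I"
  shows "supp_conj T R J = supp_conj T R I"
proof (cases "I = {}")
  case True
  then have "J = {}" using eq by (auto simp: bond_def split: if_splits)
  then show ?thesis using True by simp
next
  case False
  hence J: "J \<noteq> {}" using IJ by auto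
  have c: "supp_conj T R J \<le> supp_conj T R I" using conj_anti[OF T IJ] .
  have d: "supp_disj T R I \<le> supp_disj T R J" using disj_mono[OF T IJ] .
  have cd: "supp_conj T R I \<le> supp_disj T R I" using conj_le_disj[OF T False] .
  show ?thesis
  proof (cases "supp_conj T R I = 0")
    case True then show ?thesis using c by simp
  next
    case f2: False
    have dI: "supp_disj T R I > 0" using cd f2 by simp
    have dJ: "supp_disj T R J > 0" using d dI by simp
    have "real (supp_conj T R J) / real (supp_disj T R J)
          = real (supp_conj T R I) / real (supp_disj T R I)"
      using eq False J by (simp add: bond_def)
    hence e: "real (supp_conj T R J) * real (supp_disj T R I)
          = real (supp_conj T R I) * real (supp_disj T R J)"
      using dI dJ by (simp add: field_simps)
    have "real (supp_conj T R I) * real (supp_disj T R I)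
          \<le> real (supp_conj T R I) * real (supp_disj T R J)"
      using d by (simp add: mult_left_mono)
    hence "real (supp_conj T R I) * real (supp_disj T R I)
          \<le> real (supp_conj T R J) * real (supp_disj T R I)" using e by simp
    hence "real (supp_conj T R I) \<le> real (supp_conj T R J)" using dI by simp
    then show ?thesis using c by simp
  qed
qed

lemma minrare_strict:
  assumes T: "finite T" and K1: "K1 \<subset> K" and lt: "supp_conj T R K < supp_conj T R K1"
  shows "bond T R K < bond T R K1"
proof (cases "K1 = {}")
  case True
  have "K \<noteq> {}" using K1 by auto
  then show ?thesis using True by (simp add: bond_def)
next
  case False
  hence K: "K \<noteq> {}" using K1 by auto
  have d: "supp_disj T R K1 \<le> supp_disj T R K" using disj_mono[OF T] K1 by auto
  have cd: "supp_conj T R K1 \<le> supp_disj T R K1" using conj_le_disj[OF T False] .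
  have d1: "supp_disj T R K1 > 0" using cd lt by simp
  have "real (supp_conj T R K) / real (supp_disj T R K)
        < real (supp_conj T R K1) / real (supp_disj T R K)"
    using lt d d1 by (simp add: divide_strict_right_mono)
  also have "\<dots> \<le> real (supp_conj T R K1) / real (supp_disj T R K1)"
    apply (rule divide_left_mono) using d d1 by auto
  finally show ?thesis using False K by (simp add: bond_def)
qed

lemma closure_ex:
  assumes ctx: "extraction_context T Is R" and I: "I \<in> RCP T Is R ms mb"
  shows "\<exists>J \<in> CRCP T Is R ms mb. I \<subseteq> J \<and> bond T R J = bond T R I"
proof -
  have T: "finite T" and Is: "finite Is" using ctx by (auto simp: extraction_context_def)
  let ?S = "{J. I \<subseteq> J \<and> J \<subseteq> Is \<and> bond T R J = bond T R I}"
  have fin: "finite ?S" using Is by (rule rev_finite_subset[OF finite_Pow_iff[THEN iffD2]]) auto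
  have ne: "?S \<noteq> {}" using I by (auto simp: RCP_def)
  obtain J where J: "J \<in> ?S" and mx: "\<forall>b\<in>?S. J \<le> b \<longrightarrow> J = b"
    using finite_has_maximal[OF fin ne] by blast
  have JR: "J \<in> RCP T Is R ms mb"
  proof -
    have "supp_conj T R J \<le> supp_conj T R I" using conj_anti[OF T, of I J R] J by simp
    thus ?thesis using J I by (auto simp: RCP_def)
  qed
  have "\<forall>I1. J \<subset> I1 \<and> I1 \<subseteq> Is \<longrightarrow> bond T R J > bond T R I1"
  proof (intro allI impI)
    fix I1 assume a: "J \<subset> I1 \<and> I1 \<subseteq> Is"
    have le: "bond T R I1 \<le> bond T R J" using bond_anti[OF T] a by auto
    have "bond T R I1 \<noteq> bond T R J"
    proof
      assume "bond T R I1 = bond T R J"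
      hence "I1 \<in> ?S" using a J by auto
      thus False using mx a by auto
    qed
    thus "bond T R J > bond T R I1" using le by simp
  qed
  hence "J \<in> CRCP T Is R ms mb" using JR unfolding CRCP_def by blast
  thus ?thesis using J by blast
qed

lemma minrare_ex:
  assumes T: "finite T" and I: "I \<subseteq> Is" and Is: "finite Is" and r: "supp_conj T R I < ms"
  shows "\<exists>K \<in> MinRP T Is R ms. K \<subseteq> I"
proof -
  let ?S = "{K. K \<subseteq> I \<and> supp_conj T R K < ms}"
  have fI: "finite I" using I Is finite_subset by blast
  have fin: "finite ?S" using fI by (rule rev_finite_subset[OF finite_Pow_iff[THEN iffD2]]) auto
  have ne: "?S \<noteq> {}" using r by auto
  obtain K where K: "K \<in> ?S" and mn: "\<forall>b\<in>?S. b \<le> K \<longrightarrow> K = b"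
    using finite_has_minimal[OF fin ne] by blast
  have "\<forall>I1. I1 \<subset> K \<longrightarrow> supp_conj T R I1 \<ge> ms"
  proof (intro allI impI)
    fix I1 assume a: "I1 \<subset> K"
    show "supp_conj T R I1 \<ge> ms"
    proof (rule ccontr)
      assume "\<not> ?thesis"
      hence "I1 \<in> ?S" using a K by auto
      thus False using mn a by auto
    qed
  qed
  moreover have "K \<subseteq> Is" "supp_conj T R K < ms" "K \<subseteq> I" using K I by auto
  ultimately have "K \<in> MinRP T Is R ms" unfolding MinRP_def by blast
  thus ?thesis using \<open>K \<subseteq> I\<close> by blast
qed

lemma minrare_in_MinMRCP:
  assumes ctx: "extraction_context T Is R" and K: "K \<in> MinRP T Is R ms" and KI: "K \<subseteq> I"
    and I: "I \<in> RCP T Is R ms mb"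
  shows "K \<in> MinMRCP T Is R ms mb"
proof -
  have T: "finite T" using ctx by (auto simp: extraction_context_def)
  have "bond T R I \<le> bond T R K" using bond_anti[OF T KI] .
  hence KR: "K \<in> RCP T Is R ms mb" using K I by (auto simp: RCP_def MinRP_def)
  have "\<forall>I1. I1 \<subset> K \<longrightarrow> bond T R K < bond T R I1"
  proof (intro allI impI)
    fix I1 assume a: "I1 \<subset> K"
    have kk: "K \<subseteq> Is \<and> supp_conj T R K < ms \<and> (\<forall>I1. I1 \<subset> K \<longrightarrow> ms \<le> supp_conj T R I1)"
      using K(1) unfolding MinRP_def by simp
    hence k1: "supp_conj T R K < ms" and k2: "ms \<le> supp_conj T R I1" using a by auto
    have "supp_conj T R K < supp_conj T R I1" using k1 k2 by linarith
    thus "bond T R K < bond T R I1" using minrare_strict[OF T a] by simp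
  qed
  thus ?thesis using KR K by (auto simp: MinMRCP_def MRCP_def)
qed

definition dec :: "nat \<Rightarrow> real \<Rightarrow> ('i set \<times> nat \<times> ereal) set \<Rightarrow> 'i set \<Rightarrow> (nat \<times> ereal) option" where
  "dec ms mb D I = (if (\<exists>K s b. (K,s,b) \<in> D \<and> K \<subseteq> I) \<and> (\<exists>J s b. (J,s,b) \<in> D \<and> I \<subseteq> J)
     then Some (SOME p. \<exists>J. (J, fst p, snd p) \<in> D \<and> I \<subseteq> J \<and>
                 (\<forall>J' s' b'. (J',s',b') \<in> D \<and> I \<subseteq> J' \<longrightarrow> b' \<le> snd p))
     else None)"

lemma MinMCR_sub: "MinMCR T Is R ms mb \<subseteq> RCP T Is R ms mb"
  by (auto simp: MinMCR_def CRCP_def MinMRCP_def MRCP_def)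

theorem mainTheorem7:
  shows "exact_concise_rep (MinMCR :: 't set \<Rightarrow> 'i set \<Rightarrow> ('t \<times> 'i) set \<Rightarrow> nat \<Rightarrow> real \<Rightarrow> 'i set set)"
  unfolding exact_concise_rep_def
proof (intro conjI allI impI)
  show "\<And>T Is R minsupp minbond. extraction_context T Is R \<Longrightarrow>
     MinMCR T Is R minsupp minbond \<subseteq> RCP T Is R minsupp minbond" using MinMCR_sub by blast
  show "\<exists>Dec :: nat \<Rightarrow> real \<Rightarrow> ('i set \<times> nat \<times> ereal) set \<Rightarrow> 'i set \<Rightarrow> (nat \<times> ereal) option.
        \<forall>(T :: 't set) Is R minsupp minbond. extraction_context T Is R \<longrightarrow>
          (\<forall>I. I \<subseteq> Is \<longrightarrow>
             Dec minsupp minbond (recorded T R (MinMCR T Is R minsupp minbond)) I =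
               (if I \<in> RCP T Is R minsupp minbond
                then Some (supp_conj T R I, bond T R I) else None))"
  proof (intro exI allI impI)
    fix T :: "'t set" and Is :: "'i set" and R ms mb I
    assume ctx: "extraction_context T Is R" and IIs: "I \<subseteq> Is"
    have T: "finite T" and Is: "finite Is" using ctx by (auto simp: extraction_context_def)
    define D where "D = recorded T R (MinMCR T Is R ms mb)"
    have Dmem: "\<And>J s b. (J,s,b) \<in> D \<longleftrightarrow> J \<in> MinMCR T Is R ms mb \<and> s = supp_conj T R J \<and> b = bond T R J"
      by (auto simp: D_def recorded_def)
    show "dec ms mb D I = (if I \<in> RCP T Is R ms mb then Some (supp_conj T R I, bond T R I) else None)"
    proof (cases "I \<in> RCP T Is R ms mb")
      case True
      obtain J0 where J0: "J0 \<in> CRCP T Is R ms mb" "I \<subseteq> J0" "bond T R J0 = bond T R I"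
        using closure_ex[OF ctx True] by blast
      have J0D: "(J0, supp_conj T R J0, bond T R J0) \<in> D" using J0 Dmem by (auto simp: MinMCR_def)
      have r: "supp_conj T R I < ms" using True by (auto simp: RCP_def)
      obtain K where K: "K \<in> MinRP T Is R ms" "K \<subseteq> I" using minrare_ex[OF T IIs Is r] by blast
      have "K \<in> MinMRCP T Is R ms mb" using minrare_in_MinMRCP[OF ctx K True] .
      hence KD: "(K, supp_conj T R K, bond T R K) \<in> D" using Dmem by (auto simp: MinMCR_def)
      have cond: "(\<exists>K s b. (K,s,b) \<in> D \<and> K \<subseteq> I) \<and> (\<exists>J s b. (J,s,b) \<in> D \<and> I \<subseteq> J)"
        using KD K J0D J0 by blast
      let ?P = "\<lambda>p. \<exists>J. (J, fst p, snd p) \<in> D \<and> I \<subseteq> J \<and>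
                 (\<forall>J' s' b'. (J',s',b') \<in> D \<and> I \<subseteq> J' \<longrightarrow> b' \<le> snd p)"
      have ex: "?P (supp_conj T R I, bond T R I)"
      proof -
        have "supp_conj T R J0 = supp_conj T R I" using same_bond_conj[OF T J0(2,3)] .
        moreover have "\<forall>J' s' b'. (J',s',b') \<in> D \<and> I \<subseteq> J' \<longrightarrow> b' \<le> bond T R I"
        proof (intro allI impI)
          fix J' s' b' assume a: "(J',s',b') \<in> D \<and> I \<subseteq> J'"
          hence "b' = bond T R J'" using Dmem by blast
          thus "b' \<le> bond T R I" using bond_anti[OF T, of I J' R] a by simp
        qed
        ultimately show ?thesis using J0D J0 by (intro exI[of _ J0]) simp
      qed
      obtain s b where sb: "(SOME p. ?P p) = (s,b)" by fastforce
      have "?P (s,b)" using someI[of ?P, OF ex] sb by simp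
      then obtain J where J: "(J,s,b) \<in> D" "I \<subseteq> J"
        and mx: "\<forall>J' s' b'. (J',s',b') \<in> D \<and> I \<subseteq> J' \<longrightarrow> b' \<le> b" by auto
      have sJ: "s = supp_conj T R J" "b = bond T R J" using J(1) Dmem by blast+
      have "bond T R J0 \<le> b" using mx J0D J0(2) by blast
      moreover have "b \<le> bond T R I" using sJ bond_anti[OF T J(2)] by simp
      ultimately have bI: "b = bond T R I" using J0 by simp
      hence "s = supp_conj T R I" using sJ same_bond_conj[OF T J(2)] by simp
      then show ?thesis using True cond bI sb unfolding dec_def by simp
    next
      case False
      have "\<not> ((\<exists>K s b. (K,s,b) \<in> D \<and> K \<subseteq> I) \<and> (\<exists>J s b. (J,s,b) \<in> D \<and> I \<subseteq> J))"
      proof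
        assume "(\<exists>K s b. (K,s,b) \<in> D \<and> K \<subseteq> I) \<and> (\<exists>J s b. (J,s,b) \<in> D \<and> I \<subseteq> J)"
        then obtain K J s b s' b' where K: "(K,s,b) \<in> D" "K \<subseteq> I" and J: "(J,s',b') \<in> D" "I \<subseteq> J"
          by blast
        have KR: "K \<in> RCP T Is R ms mb" and JR: "J \<in> RCP T Is R ms mb"
          using K(1) J(1) Dmem MinMCR_sub by blast+
        have "supp_conj T R I < ms" using KR conj_anti[OF T K(2), of R] by (auto simp: RCP_def)
        moreover have "bond T R I \<ge> ereal mb"
          using JR bond_anti[OF T J(2), of R] by (auto simp: RCP_def)
        ultimately show False using False IIs by (auto simp: RCP_def)
      qed
      then show ?thesis using False unfolding dec_def by simp
    qed
  qed
qed

end
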